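(* For an integer $k\ge 2$ let $m_k=2^{2^k-1}F_1F_2\cdots F_{k-1}$, where $F_j=2^{2^j}+1$ is the $j$-th Fermat number. Then $m_k$ is imperfect, i.e. $2\beta(m_k)=m_k$, if and only if $k\in\{2,3,4,5\}$.
   Context: $\beta$ is the multiplicative arithmetic function with $\beta(1)=1$ and $\beta(p^a)=p^a-p^{a-1}+\cdots+(-1)^a=\frac{p^{a+1}+(-1)^a}{p+1}$ for every prime power $p^a$ ($a\ge1$). A positive integer $n$ is called imperfect if $2\beta(n)=n$. *)

theory Defs
  imports "HOL-Computational_Algebra.Primes"
begin

definition beta_pp :: "nat \<Rightarrow> nat \<Rightarrow> int" where
  "beta_pp p a = (\<Sum>i\<le>a. (-1) ^ (a - i) * int p ^ i)"

text \<open>beta is the multiplicative function determined by its prime-power values;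
  beta 1 = 1 (empty product).\<close>
definition beta :: "nat \<Rightarrow> int" where
  "beta n = (\<Prod>p\<in>prime_factors n. beta_pp p (multiplicity p n))"

definition imperfect :: "nat \<Rightarrow> bool" where
  "imperfect n \<longleftrightarrow> n > 0 \<and> 2 * beta n = int n"

definition fermat :: "nat \<Rightarrow> nat" where
  "fermat j = 2 ^ (2 ^ j) + 1"

definition m_k :: "nat \<Rightarrow> nat" where
  "m_k k = 2 ^ (2 ^ k - 1) * (\<Prod>j\<in>{1..k-1}. fermat j)"

end

theory Submission
  imports Defs
begin

lemma prime_by_sqrt:
  fixes n :: nat
  assumes "1 < n" "\<And>d. 2 \<le> d \<Longrightarrow> d * d \<le> n \<Longrightarrow> n mod d \<noteq> 0"
  shows "prime n"
proof (rule ccontr)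
  assume np: "\<not> prime n"
  then obtain d where d: "d dvd n" "d \<noteq> 1" "d \<noteq> n" using assms(1) prime_nat_iff by auto
  then obtain q where q: "n = d * q" by auto
  have d2: "2 \<le> d" using d q assms(1) by (cases d) auto
  have q2: "2 \<le> q" using d q assms(1) by (cases q) auto
  show False
  proof (cases "d \<le> q")
    case True
    then have "d * d \<le> n" using q by simp
    then show False using assms(2)[OF d2] q by simp
  next
    case False
    then have "q * q \<le> n" using q by simp
    then show False using assms(2)[OF q2] q by simp
  qed
qed

lemma prime_by_list:
  fixes n B :: nat
  assumes "1 < n" "n < B * B" "list_all (\<lambda>d. n mod d \<noteq> 0) [2..<B]"
  shows "prime n"
proof (rule prime_by_sqrt[OF assms(1)])
  fix d assume d: "2 \<le> d" "d * d \<le> n"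
  have "d < B"
  proof (rule ccontr)
    assume "\<not> d < B"
    then have "B * B \<le> d * d" by (simp add: mult_le_mono)
    then show False using d assms(2) by simp
  qed
  then show "n mod d \<noteq> 0" using assms(3) d by (auto simp: list_all_iff)
qed

lemma beta_pp_0: "beta_pp p 0 = 1" by (simp add: beta_pp_def)

lemma beta_pp_Suc: "beta_pp p (Suc a) = int p * beta_pp p a + (-1)^(Suc a)"
proof -
  have "beta_pp p (Suc a) = (-1)^(Suc a) + (\<Sum>i\<le>a. (-1)^(a-i) * int p^(Suc i))"
    unfolding beta_pp_def by (subst sum.atMost_Suc_shift) simp
  also have "\<dots> = (-1)^Suc a + int p * (\<Sum>i\<le>a. (-1)^(a-i)*int p^i)"
    by (simp add: sum_distrib_left algebra_simps)
  finally show ?thesis by (simp add: beta_pp_def)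
qed

lemma beta_pp_1': "beta_pp p (Suc 0) = int p - 1"
  using beta_pp_Suc[of p 0] by (simp add: beta_pp_0)

lemma beta_pp_1: "beta_pp p 1 = int p - 1"
  using beta_pp_1' by simp

lemma beta_pp_closed: "(int p + 1) * beta_pp p a = int p^(Suc a) + (-1)^a"
  by (induction a) (simp_all add: beta_pp_0 beta_pp_Suc algebra_simps)

lemma beta_pp_ge:
  assumes "2 \<le> p" "1 \<le> a"
  shows "int p - 1 \<le> beta_pp p a"
  using assms(2)
proof (induction a rule: dec_induct)
  case base
  then show ?case by (simp add: beta_pp_1')
next
  case (step n)
  have b1: "1 \<le> beta_pp p n" using step assms by simp
  have m: "2 * beta_pp p n \<le> int p * beta_pp p n"
    using assms b1 by (intro mult_right_mono) auto
  have s: "(-1::int)^(Suc n) \<ge> -1" by (cases "even n") auto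
  have e: "beta_pp p (Suc n) = int p * beta_pp p n + (-1)^(Suc n)" by (rule beta_pp_Suc)
  show ?case using m s e step.IH b1 by linarith
qed

lemma beta_pp_641_mod: "beta_pp 641 a mod 10 = (if even a then 1 else 0)"
proof (induction a)
  case 0
  then show ?case by (simp add: beta_pp_0)
next
  case (Suc a)
  have "beta_pp 641 (Suc a) = 10 * (64 * beta_pp 641 a) + (beta_pp 641 a + (-1)^Suc a)"
    by (simp add: beta_pp_Suc)
  moreover have "\<And>m y::int. (10 * m + y) mod 10 = y mod 10" by simp
  ultimately have "beta_pp 641 (Suc a) mod 10 = (beta_pp 641 a + (-1)^Suc a) mod 10"
    by metis
  also have "\<dots> = (beta_pp 641 a mod 10 + (-1)^Suc a) mod 10"
    by (metis mod_add_left_eq)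
  finally show ?case using Suc by (cases "even a") auto
qed

lemma beta_prime_power:
  assumes "prime p"
  shows "beta (p ^ e) = beta_pp p e"
proof (cases "e = 0")
  case True
  then show ?thesis by (simp add: beta_def beta_pp_0)
next
  case False
  have "prime_factors (p ^ e) = {p}"
    using assms False by (simp add: prime_factorization_prime_power)
  then show ?thesis using assms by (simp add: beta_def)
qed

lemma beta_mult_coprime:
  fixes a b :: nat
  assumes "coprime a b" "a > 0" "b > 0"
  shows "beta (a * b) = beta a * beta b"
proof -
  have pf: "prime_factors (a * b) = prime_factors a \<union> prime_factors b"
    using assms by (simp add: prime_factors_product)
  have disj: "prime_factors a \<inter> prime_factors b = {}"
  proof (rule ccontr)
    assume "prime_factors a \<inter> prime_factors b \<noteq> {}"
    then obtain p where p: "p \<in> prime_factors a" "p \<in> prime_factors b" by blast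
    then have "p dvd a" "p dvd b" "prime p" by (auto simp: in_prime_factors_iff)
    then show False using assms(1) by (metis coprime_common_divisor not_prime_unit)
  qed
  have A: "(\<Prod>p\<in>prime_factors a. beta_pp p (multiplicity p (a*b)))
        = (\<Prod>p\<in>prime_factors a. beta_pp p (multiplicity p a))"
  proof (rule prod.cong[OF refl])
    fix p assume p: "p \<in> prime_factors a"
    then have "\<not> p dvd b" using disj assms by (auto simp: in_prime_factors_iff)
    then have "multiplicity p b = 0" by (rule not_dvd_imp_multiplicity_0)
    moreover have "multiplicity p (a*b) = multiplicity p a + multiplicity p b"
      using p assms by (intro prime_elem_multiplicity_mult_distrib) (auto simp: in_prime_factors_iff)
    ultimately show "beta_pp p (multiplicity p (a*b)) = beta_pp p (multiplicity p a)" by simp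
  qed
  have B: "(\<Prod>p\<in>prime_factors b. beta_pp p (multiplicity p (a*b)))
        = (\<Prod>p\<in>prime_factors b. beta_pp p (multiplicity p b))"
  proof (rule prod.cong[OF refl])
    fix p assume p: "p \<in> prime_factors b"
    then have "\<not> p dvd a" using disj assms by (auto simp: in_prime_factors_iff)
    then have "multiplicity p a = 0" by (rule not_dvd_imp_multiplicity_0)
    moreover have "multiplicity p (a*b) = multiplicity p a + multiplicity p b"
      using p assms by (intro prime_elem_multiplicity_mult_distrib) (auto simp: in_prime_factors_iff)
    ultimately show "beta_pp p (multiplicity p (a*b)) = beta_pp p (multiplicity p b)" by simp
  qed
  show ?thesis
    unfolding beta_def pf using A B disj by (simp add: prod.union_disjoint)
qed

lemma beta_times_prime:
  fixes n p :: nat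
  assumes "prime p" "n > 0" "\<not> p dvd n"
  shows "beta (n * p) = beta n * (int p - 1)"
proof -
  have "coprime n p" using assms prime_imp_coprime coprime_commute by blast
  moreover have "p > 0" using assms prime_gt_0_nat by blast
  ultimately have "beta (n*p) = beta n * beta p" using assms beta_mult_coprime by blast
  moreover have "beta p = int p - 1" using beta_prime_power[OF assms(1), of 1] by (simp add: beta_pp_1')
  ultimately show ?thesis by simp
qed

lemma prod_fermat: "(\<Prod>j<k. fermat j) + 1 = 2 ^ (2 ^ k)"
proof (induction k)
  case 0
  then show ?case by simp
next
  case (Suc k)
  define Q where "Q = (\<Prod>j<k. fermat j)"
  have f: "fermat k = Q + 2" using Suc unfolding Q_def fermat_def by simp
  have "(\<Prod>j<Suc k. fermat j) + 1 = Q * (Q + 2) + 1" by (simp add: Q_def f)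
  also have "\<dots> = (Q + 1)^2" by (simp add: power2_eq_square algebra_simps)
  also have "\<dots> = 2 ^ (2 ^ Suc k)" using Suc by (simp add: Q_def power_mult[symmetric] mult.commute)
  finally show ?case .
qed

lemma prod_fermat_P:
  assumes "k \<ge> 1"
  shows "3 * (\<Prod>j\<in>{1..k-1}. fermat j) + 1 = 2 ^ (2 ^ k)"
proof -
  have "{..<k} = insert 0 {1..k-1}" using assms by auto
  then have "(\<Prod>j<k. fermat j) = fermat 0 * (\<Prod>j\<in>{1..k-1}. fermat j)" by simp
  then show ?thesis using prod_fermat[of k] by (simp add: fermat_def)
qed

lemma beta_pp_2_P:
  assumes "k \<ge> 1"
  shows "beta_pp 2 (2^k - 1) = int (\<Prod>j\<in>{1..k-1}. fermat j)"
proof -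
  define P where "P = (\<Prod>j\<in>{1..k-1}. fermat j)"
  have P3: "3 * P + 1 = 2 ^ (2 ^ k)" using prod_fermat_P[OF assms] by (simp add: P_def)
  have ev: "even ((2::nat)^k)" using assms by simp
  have pos: "(2::nat)^k \<ge> 1" by simp
  have s: "Suc (2^k - 1) = (2::nat)^k" using pos by simp
  have o: "odd ((2::nat)^k - 1)" using ev pos by simp
  have "(int 2 + 1) * beta_pp 2 (2^k - 1) = int 2 ^ Suc (2^k - 1) + (-1)^(2^k - 1)"
    by (rule beta_pp_closed)
  also have "\<dots> = 2 ^ (2^k) - 1" using s o by simp
  also have "\<dots> = 3 * int P"
  proof -
    have "int (3 * P + 1) = int (2 ^ (2 ^ k))" using P3 by simp
    then show ?thesis by simp
  qed
  finally show ?thesis by (simp add: P_def)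
qed

lemma prime_641: "prime (641::nat)"
  by (rule prime_by_list[where B=26]) (simp_all add: upt_rec)

lemma not_imperfect_ge6:
  assumes "k \<ge> 6"
  shows "\<not> imperfect (m_k k)"
proof
  assume imp: "imperfect (m_k k)"
  define a where "a = 2^k - (1::nat)"
  define P where "P = (\<Prod>j\<in>{1..k-1}. fermat j)"
  define m where "m = m_k k"
  have k1: "k \<ge> 1" using assms by simp
  have mdef: "m = 2^a * P" by (simp add: m_def m_k_def a_def P_def)
  have P3: "3 * P + 1 = 2 ^ (2 ^ k)" using prod_fermat_P[OF k1] by (simp add: P_def)
  have Podd: "odd P"
  proof
    assume "even P"
    then have o: "odd (3 * P + 1)" by simp
    have "even ((2::nat)^(2^k))" by simp
    then show False using P3 o by metis
  qed
  then have Ppos: "P > 0" by (cases P) auto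
  have "(2::nat)^k \<ge> 2^6" using assms by (intro power_increasing) auto
  then have a1: "a \<ge> 1" by (simp add: a_def)
  have m0: "m \<noteq> 0" using mdef Ppos by simp
  have mult2: "multiplicity 2 m = a"
  proof -
    have "multiplicity 2 m = multiplicity (2::nat) (2^a) + multiplicity 2 P"
      unfolding mdef using Ppos by (intro prime_elem_multiplicity_mult_distrib) auto
    moreover have "multiplicity (2::nat) P = 0" using Podd by (intro not_dvd_imp_multiplicity_0) auto
    ultimately show ?thesis by simp
  qed
  have two_in: "2 \<in> prime_factors m"
    using m0 a1 mdef by (auto simp: in_prime_factors_iff)
  define R where "R = (\<Prod>p\<in>prime_factors m - {2}. beta_pp p (multiplicity p m))"
  have bm: "beta m = beta_pp 2 a * R"
    unfolding beta_def R_def using two_in mult2 by (simp add: prod.remove)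
  have bP: "beta_pp 2 a = int P" unfolding a_def P_def by (rule beta_pp_2_P[OF k1])
  have "2 * beta m = int m" using imp by (simp add: imperfect_def m_def)
  then have "2 * (int P * R) = int (2^a * P)" unfolding bm bP mdef[symmetric] .
  then have "int P * (2 * R) = int P * 2^a" by (simp only: of_nat_mult of_nat_power mult.commute mult.left_commute of_nat_numeral)
  then have "2 * R = 2^a" using Ppos by simp
  moreover have "(2::int)^a = 2 * 2^(a-1)" using a1 by (cases a) auto
  ultimately have R: "R = 2^(a-1)" by simp
  have "641 dvd fermat 5" by (simp add: fermat_def)
  moreover have "fermat 5 dvd P" unfolding P_def using assms by (intro dvd_prodI) auto
  moreover have "P dvd m" using mdef by simp
  ultimately have d641: "641 dvd m" by (meson dvd_trans)
  have pf641: "641 \<in> prime_factors m" using d641 m0 prime_641 in_prime_factors_iff by blast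
  have in641: "641 \<in> prime_factors m - {2}" using pf641 by (intro DiffI) simp_all
  define e where "e = multiplicity 641 m"
  have pe: "prime_elem (641::nat)" using prime_641 by (rule prime_imp_prime_elem)
  have "0 < e" unfolding e_def using prime_multiplicity_gt_zero_iff[OF pe m0] d641 by blast
  then have e1: "e \<ge> 1" by linarith
  have dv: "beta_pp 641 e dvd 2^(a-1)" unfolding e_def R[symmetric] R_def
    using in641 by (intro dvd_prodI) simp_all
  have ge: "640 \<le> beta_pp 641 e" using beta_pp_ge[of 641 e] e1 by simp
  show False
  proof (cases "even e")
    case True
    then have "beta_pp 641 e mod 10 = 1" by (simp add: beta_pp_641_mod)
    then have "beta_pp 641 e mod 10 mod 2 = 1" by simp
    then have "beta_pp 641 e mod 2 = 1" by (simp add: mod_mod_cancel)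
    then have "odd (beta_pp 641 e)" by (simp add: odd_iff_mod_2_eq_one)
    then have "coprime (beta_pp 641 e) (2^(a-1))" by simp
    then have "is_unit (beta_pp 641 e)" using dv coprime_absorb_left by blast
    then show False using ge by simp
  next
    case False
    then have "beta_pp 641 e mod 10 = 0" by (simp add: beta_pp_641_mod)
    then have "beta_pp 641 e mod 10 mod 5 = 0" by simp
    then have "beta_pp 641 e mod 5 = 0" by (simp add: mod_mod_cancel)
    then have "5 dvd beta_pp 641 e" by (simp add: dvd_eq_mod_eq_0)
    then have "(5::int) dvd 2^(a-1)" using dv by (meson dvd_trans)
    moreover have "prime (5::int)" using prime_by_list[of 5 3] by (simp add: upt_rec)
    ultimately have "(5::int) dvd 2" using prime_dvd_power by blast
    then show False by simp
  qed
qed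


lemma imperfect_if:
  assumes k1: "k \<ge> 1" and bP: "beta (\<Prod>j\<in>{1..k-1}. fermat j) = 2^(2^k - 2)"
  shows "imperfect (m_k k)"
proof -
  define a where "a = 2^k - (1::nat)"
  define P where "P = (\<Prod>j\<in>{1..k-1}. fermat j)"
  have mdef: "m_k k = 2^a * P" by (simp add: m_k_def a_def P_def)
  have P3: "3 * P + 1 = 2 ^ (2 ^ k)" using prod_fermat_P[OF k1] by (simp add: P_def)
  have Podd: "odd P"
  proof
    assume "even P"
    then have o: "odd (3 * P + 1)" by simp
    have "even ((2::nat)^(2^k))" using k1 by simp
    then show False using P3 o by metis
  qed
  then have Ppos: "P > 0" by (cases P) auto
  have "(2::nat)^k \<ge> 2^1" using k1 by (intro power_increasing) auto
  then have a1: "a \<ge> 1" by (simp add: a_def)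
  have cop: "coprime ((2::nat)^a) P" using Podd by simp
  have bm0: "beta (m_k k) = beta (2^a) * beta P" unfolding mdef using cop Ppos
    by (intro beta_mult_coprime) auto
  have b2a: "beta (2^a) = int P" using beta_prime_power[of 2 a] beta_pp_2_P[OF k1]
    by (simp add: a_def P_def)
  have am: "a - 1 = 2^k - 2" unfolding a_def by simp
  have bP': "beta P = 2^(a-1)" unfolding am P_def by (rule bP)
  have bm: "beta (m_k k) = int P * 2^(a-1)" using bm0 b2a bP' by simp
  have "(2::int)^a = 2 * 2^(a-1)" using a1 by (cases a) auto
  then have "2 * beta (m_k k) = int P * 2^a" using bm by simp
  also have "\<dots> = int (m_k k)" unfolding mdef by simp
  finally have "2 * beta (m_k k) = int (m_k k)" .
  moreover have "m_k k > 0" using mdef Ppos by simp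
  ultimately show ?thesis by (simp add: imperfect_def)
qed

lemma prime_5: "prime (5::nat)" by (rule prime_by_list[where B=3]) (simp_all add: upt_rec)
lemma prime_17: "prime (17::nat)" by (rule prime_by_list[where B=5]) (simp_all add: upt_rec)
lemma prime_257: "prime (257::nat)" by (rule prime_by_list[where B=17]) (simp_all add: upt_rec)
lemma prime_65537: "prime (65537::nat)" by (rule prime_by_list[where B=257]) (simp_all add: upt_rec)

lemma beta_5: "beta 5 = 4"
proof -
  have "beta (5 ^ 1) = beta_pp 5 1" by (rule beta_prime_power[OF prime_5])
  then show ?thesis by (simp add: beta_pp_1')
qed

lemma beta_85: "beta 85 = 64"
proof -
  have "beta (5 * 17) = beta 5 * (int 17 - 1)"
    by (rule beta_times_prime[OF prime_17]) simp_all
  then show ?thesis using beta_5 by simp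
qed

lemma beta_21845: "beta 21845 = 2^14"
proof -
  have "beta (85 * 257) = beta 85 * (int 257 - 1)"
    by (rule beta_times_prime[OF prime_257]) simp_all
  then show ?thesis using beta_85 by simp
qed

lemma beta_big: "beta 1431655765 = 2^30"
proof -
  have "beta (21845 * 65537) = beta 21845 * (int 65537 - 1)"
    by (rule beta_times_prime[OF prime_65537]) simp_all
  then show ?thesis using beta_21845 by simp
qed

theorem mainTheorem2:
  fixes k :: nat
  assumes "k \<ge> 2"
  shows "imperfect (m_k k) \<longleftrightarrow> k \<in> {2, 3, 4, 5}"
proof
  assume "imperfect (m_k k)"
  then show "k \<in> {2, 3, 4, 5}" using not_imperfect_ge6[of k] assms by fastforce
next
  assume "k \<in> {2, 3, 4, 5}"
  then consider "k = 2" | "k = 3" | "k = 4" | "k = 5" by blast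
  then show "imperfect (m_k k)"
  proof cases
    case 1
    have "{1..k-1} = {1::nat}" using 1 by auto
    then show ?thesis using 1 by (intro imperfect_if) (simp_all add: fermat_def beta_5)
  next
    case 2
    have "{1..k-1} = {1::nat,2}" using 2 by auto
    then show ?thesis using 2 by (intro imperfect_if) (simp_all add: fermat_def beta_85)
  next
    case 3
    have "{1..k-1} = {1::nat,2,3}" using 3 by auto
    then show ?thesis using 3 by (intro imperfect_if) (simp_all add: fermat_def beta_21845)
  next
    case 4
    have "{1..k-1} = {1::nat,2,3,4}" using 4 by auto
    then show ?thesis using 4 by (intro imperfect_if) (simp_all add: fermat_def beta_big)
  qed
qed

end
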